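(* For every point of $\mathcal H$ and all $j,k\ge0$, the vector field $X_k$ of the central system satisfies $$\frac{\partial H^{(j)}}{\partial t_k}=-\pi_-\big(H^{(j)}H^{(k)}\big),$$ where $\pi_-$ is the projection onto $\mathcal H_-$ along $\mathcal H_+$ defined at that point.
   Context: Let $z$ be a formal variable and $\mathcal L$ the space of formal Laurent series $\sum_{j\le N} l_j z^j$ (finitely many positive powers of $z$). Let $\mathcal H$ be the set of sequences $H=(H^{(k)})_{k\ge0}$ of elements of $\mathcal L$ with $H^{(0)}=1$ and, for $k\ge1$, $H^{(k)}=z^k+\sum_{l\ge1}H^k_l z^{-l}$; the coefficients $H^k_l$ are coordinates on $\mathcal H$, and we set $H^0_l=0$. The central system (CS) is the family of vector fields $X_j$, $j\ge1$, on $\mathcal H$, with associated times $t_j$, defined by $$\frac{\partial H^{(k)}}{\partial t_j}=H^{(j+k)}-H^{(j)}H^{(k)}+\sum_{l=1}^{k}H^j_lH^{(k-l)}+\sum_{l=1}^{j}H^k_lH^{(j-l)},\qquad k\ge0;$$ the right-hand side contains only negative powers of $z$, so this determines the components $X_j(H^k_l)$. For $H\in\mathcal H$ let $\mathcal H_+=\mathrm{span}\{H^{(k)}:k\ge0\}$ (finite linear combinations) and $\mathcal H_-=\{\sum_{l\ge1}c_lz^{-l}\}$, so that $\mathcal L=\mathcal H_+\oplus\mathcal H_-$; let $\pi_\pm$ be the corresponding projections. *)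

theory Defs
  imports Complex_Main
begin

text \<open>Formal Laurent series sum_{n} l_n z^n are represented by their coefficient
functions int => complex (only those with finitely many nonzero positive
coefficients, i.e. bounded above, are Laurent series in the sense of the paper).\<close>

type_synonym lser = "int \<Rightarrow> complex"

definition lser_ub :: "lser \<Rightarrow> nat" where
  "lser_ub f = (LEAST N::nat. \<forall>m. m > int N \<longrightarrow> f m = 0)"

text \<open>Product of two Laurent series bounded above: the coefficient of z^n is the
finite sum over a + b = n with a \<le> ub f, b \<le> ub g.\<close>
definition lmul :: "lser \<Rightarrow> lser \<Rightarrow> lser" where
  "lmul f g = (\<lambda>n. \<Sum>a\<in>{n - int (lser_ub g) .. int (lser_ub f)}. f a * g (n - a))"

text \<open>A point of the space \<H> is given by its coordinates c k l = H^k_l (k,l \<ge> 1);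
values of c at k = 0 or l = 0 are irrelevant.  Convention H^0_l = 0.\<close>
definition coord :: "(nat \<Rightarrow> nat \<Rightarrow> complex) \<Rightarrow> nat \<Rightarrow> nat \<Rightarrow> complex" where
  "coord c k l = (if k = 0 then 0 else c k l)"

definition Hser :: "(nat \<Rightarrow> nat \<Rightarrow> complex) \<Rightarrow> nat \<Rightarrow> lser" where
  "Hser c k = (if k = 0 then (\<lambda>n. if n = 0 then 1 else 0)
               else (\<lambda>n. if n = int k then 1 else if n < 0 then c k (nat (- n)) else 0))"

text \<open>Right-hand side of the central system for dH^(k)/dt_j.\<close>
definition CS_rhs :: "(nat \<Rightarrow> nat \<Rightarrow> complex) \<Rightarrow> nat \<Rightarrow> nat \<Rightarrow> lser" where
  "CS_rhs c j k = (\<lambda>n. Hser c (j + k) n - lmul (Hser c j) (Hser c k) n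
      + (\<Sum>l\<in>{1..k}. coord c j l * Hser c (k - l) n)
      + (\<Sum>l\<in>{1..j}. coord c k l * Hser c (j - l) n))"

text \<open>Components of the vector field X_j: X_j(H^k_l) = coefficient of z^{-l}.\<close>
definition CS_field :: "(nat \<Rightarrow> nat \<Rightarrow> complex) \<Rightarrow> nat \<Rightarrow> nat \<Rightarrow> nat \<Rightarrow> complex" where
  "CS_field c j k l = CS_rhs c j k (- int l)"

text \<open>dH^(k)/dt_j as a Laurent series (H^(k) has constant nonnegative part).\<close>
definition dH :: "(nat \<Rightarrow> nat \<Rightarrow> complex) \<Rightarrow> nat \<Rightarrow> nat \<Rightarrow> lser" where
  "dH c j k = (\<lambda>n. if n < 0 then CS_field c j k (nat (- n)) else 0)"

definition Hplus :: "(nat \<Rightarrow> nat \<Rightarrow> complex) \<Rightarrow> lser set" where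
  "Hplus c = {f. \<exists>S a. finite S \<and> f = (\<lambda>n. \<Sum>k\<in>S. a k * Hser c k n)}"

definition Hminus :: "lser set" where
  "Hminus = {f. \<forall>n\<ge>0. f n = 0}"

definition pi_minus :: "(nat \<Rightarrow> nat \<Rightarrow> complex) \<Rightarrow> lser \<Rightarrow> lser" where
  "pi_minus c f = (THE g. g \<in> Hminus \<and> f - g \<in> Hplus c)"

end

theory Submission
  imports Defs
begin

lemma Hser_ub: "lser_ub (Hser c k) = k"
  unfolding lser_ub_def
proof (rule Least_equality)
  show "\<forall>m>int k. Hser c k m = 0" by (auto simp: Hser_def)
next
  fix N :: nat assume "\<forall>m>int N. Hser c k m = 0"
  then have "Hser c k (int k) = 0 \<or> \<not> int k > int N" by blast
  then show "k \<le> N" by (auto simp: Hser_def split: if_splits)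
qed

lemma Hser_nonneg: "n \<ge> 0 \<Longrightarrow> Hser c m n = (if n = int m then 1 else 0)"
  by (auto simp: Hser_def)

lemma lmul_nonneg:
  assumes n: "n \<ge> 0"
  shows "lmul (Hser c j) (Hser c k) n = (if n = int j + int k then 1 else 0)
     + (if n < int j then coord c k (nat (int j - n)) else 0)
     + (if n < int k then coord c j (nat (int k - n)) else 0)"
proof -
  have pt: "Hser c j a * Hser c k (n - a) =
      (if a = n - int k \<and> n < int k then coord c j (nat (int k - n)) else 0)
      + (if a = int j then Hser c k (n - int j) else 0)" for a
    using n by (auto simp: Hser_def coord_def)
  have "lmul (Hser c j) (Hser c k) n = (\<Sum>a\<in>{n - int k .. int j}. Hser c j a * Hser c k (n - a))"
    by (simp add: lmul_def Hser_ub)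
  also have "\<dots> = (\<Sum>a\<in>{n - int k .. int j}.
      (if a = n - int k \<and> n < int k then coord c j (nat (int k - n)) else 0)
      + (if a = int j then Hser c k (n - int j) else 0))"
    by (simp add: pt)
  also have "\<dots> = (if n < int k then coord c j (nat (int k - n)) else 0)
      + (if n - int k \<le> int j then Hser c k (n - int j) else 0)"
  proof -
    have a: "(\<Sum>a\<in>{n - int k .. int j}. (if a = n - int k \<and> n < int k then coord c j (nat (int k - n)) else 0))
      = (if n < int k then coord c j (nat (int k - n)) else 0)"
    proof (cases "n < int k")
      case True
      then have "(\<Sum>a\<in>{n - int k .. int j}. (if a = n - int k \<and> n < int k then coord c j (nat (int k - n)) else 0))
        = (\<Sum>a\<in>{n - int k .. int j}. (if a = n - int k then coord c j (nat (int k - n)) else 0))" by simp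
      also have "\<dots> = coord c j (nat (int k - n))" using True by (simp add: sum.delta)
      finally show ?thesis using True by simp
    qed simp
    have b: "(\<Sum>a\<in>{n - int k .. int j}. (if a = int j then Hser c k (n - int j) else 0))
      = (if n - int k \<le> int j then Hser c k (n - int j) else 0)"
      by (simp add: sum.delta)
    show ?thesis by (simp only: sum.distrib a b)
  qed
  also have "\<dots> = (if n = int j + int k then 1 else 0)
     + (if n < int j then coord c k (nat (int j - n)) else 0)
     + (if n < int k then coord c j (nat (int k - n)) else 0)"
    using n by (auto simp: Hser_def coord_def)
  finally show ?thesis .
qed

lemma lmul_comm: "lmul f g = lmul g f"
proof (rule ext)
  fix n
  show "lmul f g n = lmul g f n"
    unfolding lmul_def
    by (rule sum.reindex_bij_witness[where i="\<lambda>b. n - b" and j="\<lambda>a. n - a"]) auto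
qed

lemma sum_part_nonneg:
  assumes n: "n \<ge> 0"
  shows "(\<Sum>l\<in>{1..j}. coord c k l * Hser c (j - l) n) = (if n < int j then coord c k (nat (int j - n)) else 0)"
proof -
  have "(\<Sum>l\<in>{1..j}. coord c k l * Hser c (j - l) n) = (\<Sum>l\<in>{1..j}. if l = j - nat n then coord c k l else 0)"
    by (rule sum.cong) (use n in \<open>auto simp: Hser_nonneg\<close>)
  also have "\<dots> = (if n < int j then coord c k (nat (int j - n)) else 0)"
  proof -
    have e1: "(j - nat n \<in> {1..j}) = (n < int j)" using n by auto
    have e2: "coord c k (j - nat n) = coord c k (nat (int j - n))" using n by (metis nat_diff_distrib' nat_int of_nat_0_le_iff)
    show ?thesis by (simp only: sum.delta finite_atLeastAtMost e1 e2)
  qed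
  finally show ?thesis .
qed

lemma CS_nonneg: assumes n: "n \<ge> 0" shows "CS_rhs c k j n = 0"
  unfolding CS_rhs_def sum_part_nonneg[OF n] unfolding lmul_nonneg[OF n] Hser_nonneg[OF n]
  by auto

lemma Hplus_add: "f \<in> Hplus c \<Longrightarrow> g \<in> Hplus c \<Longrightarrow> (\<lambda>n. f n + g n) \<in> Hplus c"
proof -
  assume f: "f \<in> Hplus c" and g: "g \<in> Hplus c"
  obtain S a where S: "finite S" "f = (\<lambda>n. \<Sum>k\<in>S. a k * Hser c k n)"
    using f unfolding Hplus_def mem_Collect_eq by (elim exE conjE) simp
  obtain T b where T: "finite T" "g = (\<lambda>n. \<Sum>k\<in>T. b k * Hser c k n)"
    using g unfolding Hplus_def mem_Collect_eq by (elim exE conjE) simp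
  define a' where "a' k = (if k \<in> S then a k else 0)" for k
  define b' where "b' k = (if k \<in> T then b k else 0)" for k
  have fa: "f n = (\<Sum>k\<in>S \<union> T. a' k * Hser c k n)" for n
  proof -
    have "(\<Sum>k\<in>S \<union> T. a' k * Hser c k n) = (\<Sum>k\<in>S \<union> T. if k \<in> S then a k * Hser c k n else 0)"
      unfolding a'_def by (rule sum.cong) simp_all
    also have "\<dots> = (\<Sum>k\<in>(S \<union> T) \<inter> S. a k * Hser c k n)"
      by (rule sum.inter_restrict[symmetric]) (use S T in simp)
    also have "(S \<union> T) \<inter> S = S" by blast
    finally show ?thesis using S(2) by simp
  qed
  have gb: "g n = (\<Sum>k\<in>S \<union> T. b' k * Hser c k n)" for n
  proof -
    have "(\<Sum>k\<in>S \<union> T. b' k * Hser c k n) = (\<Sum>k\<in>S \<union> T. if k \<in> T then b k * Hser c k n else 0)"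
      unfolding b'_def by (rule sum.cong) simp_all
    also have "\<dots> = (\<Sum>k\<in>(S \<union> T) \<inter> T. b k * Hser c k n)"
      by (rule sum.inter_restrict[symmetric]) (use S T in simp)
    also have "(S \<union> T) \<inter> T = T" by blast
    finally show ?thesis using T(2) by simp
  qed
  have "(\<lambda>n. f n + g n) = (\<lambda>n. \<Sum>k\<in>S \<union> T. (a' k + b' k) * Hser c k n)"
    by (rule ext) (simp only: fa gb sum.distrib[symmetric] distrib_right)
  then show ?thesis unfolding Hplus_def using S T by (intro CollectI exI[of _ "S \<union> T"] exI[of _ "\<lambda>k. a' k + b' k"]) simp
qed

lemma Hplus_smult: "f \<in> Hplus c \<Longrightarrow> (\<lambda>n. x * f n) \<in> Hplus c"
proof -
  assume "f \<in> Hplus c"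
  then obtain S a where S: "finite S" "f = (\<lambda>n. \<Sum>k\<in>S. a k * Hser c k n)"
    unfolding Hplus_def mem_Collect_eq by (elim exE conjE) simp
  have "(\<lambda>n. x * f n) = (\<lambda>n. \<Sum>k\<in>S. (x * a k) * Hser c k n)"
    by (simp add: S(2) sum_distrib_left mult.assoc)
  then show ?thesis unfolding Hplus_def using S by (intro CollectI exI[of _ S] exI[of _ "\<lambda>k. x * a k"]) simp
qed

lemma Hplus_H: "(\<lambda>n. Hser c m n) \<in> Hplus c"
  unfolding Hplus_def by (rule CollectI, rule exI[of _ "{m}"], rule exI[of _ "\<lambda>_. 1"]) simp

lemma Hplus_zero: "(\<lambda>n. 0) \<in> Hplus c"
  unfolding Hplus_def by (rule CollectI, rule exI[of _ "{}"]) simp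

lemma Hplus_sum: "finite L \<Longrightarrow> (\<And>l. l \<in> L \<Longrightarrow> (\<lambda>n. F l n) \<in> Hplus c) \<Longrightarrow> (\<lambda>n. \<Sum>l\<in>L. F l n) \<in> Hplus c"
proof (induction L rule: finite_induct)
  case empty then show ?case by (simp add: Hplus_zero)
next
  case (insert x F')
  then show ?case by (simp add: Hplus_add)
qed

lemma Hplus_zero_eq:
  assumes "d \<in> Hplus c" "\<forall>n\<ge>0. d n = 0" shows "d = (\<lambda>n. 0)"
proof -
  obtain S a where S: "finite S" "d = (\<lambda>n. \<Sum>k\<in>S. a k * Hser c k n)"
    using assms(1) unfolding Hplus_def mem_Collect_eq by (elim exE conjE) simp
  have coef: "d (int m) = (if m \<in> S then a m else 0)" for m
  proof -
    have "d (int m) = (\<Sum>k\<in>S. if k = m then a k else 0)"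
      unfolding S(2) by (intro sum.cong) (auto simp: Hser_nonneg)
    then show ?thesis using S(1) by (simp add: sum.delta)
  qed
  have "a m = 0" if "m \<in> S" for m using coef[of m] assms(2) that by auto
  then show ?thesis using S(2) by (auto intro!: ext sum.neutral)
qed

lemma Hplus_eq:
  assumes "f \<in> Hplus c" "g \<in> Hplus c" "\<forall>n\<ge>0. f n = g n" shows "f = g"
proof -
  have "(\<lambda>n. f n - g n) \<in> Hplus c" using Hplus_add[OF assms(1) Hplus_smult[OF assms(2), of "-1"]] by simp
  then have z: "(\<lambda>n. f n - g n) = (\<lambda>n. 0)" using assms(3) by (intro Hplus_zero_eq) auto
  show ?thesis
  proof (rule ext)
    fix x show "f x = g x" using fun_cong[OF z, of x] by simp
  qed
qed

theorem mainTheorem2: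
  fixes c :: "nat \<Rightarrow> nat \<Rightarrow> complex" and j k :: nat
  shows "dH c k j = - pi_minus c (lmul (Hser c j) (Hser c k))"
proof -
  define L where "L = lmul (Hser c k) (Hser c j)"
  define CS where "CS = CS_rhs c k j"
  define B where "B = (\<lambda>n. Hser c (k + j) n + (\<Sum>l\<in>{1..j}. coord c k l * Hser c (j - l) n)
      + (\<Sum>l\<in>{1..k}. coord c j l * Hser c (k - l) n))"
  have L': "lmul (Hser c j) (Hser c k) = L" unfolding L_def by (rule lmul_comm)
  have CSB: "CS n = B n - L n" for n unfolding CS_def B_def L_def CS_rhs_def by simp
  have CS0: "n \<ge> 0 \<Longrightarrow> CS n = 0" for n unfolding CS_def by (rule CS_nonneg)
  have Bp: "B \<in> Hplus c"
    unfolding B_def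
    by (intro Hplus_add Hplus_sum Hplus_smult Hplus_H) auto
  have dH: "dH c k j = CS"
    by (rule ext) (auto simp: dH_def CS_field_def CS_def CS_nonneg)
  have pm: "pi_minus c L = - CS"
    unfolding pi_minus_def
  proof (rule the_equality)
    show "- CS \<in> Hminus \<and> L - - CS \<in> Hplus c"
    proof
      show "- CS \<in> Hminus" using CS0 by (simp add: Hminus_def)
      have "L - - CS = B" by (rule ext) (simp add: CSB)
      then show "L - - CS \<in> Hplus c" using Bp by simp
    qed
  next
    fix g assume g: "g \<in> Hminus \<and> L - g \<in> Hplus c"
    have "L - g = B"
      by (rule Hplus_eq) (use g Bp CSB CS0 in \<open>auto simp: Hminus_def\<close>)
    show "g = - CS"
    proof (rule ext)
      fix x
      have h: "L x - g x = B x" using fun_cong[OF \<open>L - g = B\<close>, of x] by simp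
      have "(- CS) x = L x - B x" by (simp add: CSB)
      also have "\<dots> = g x" unfolding h[symmetric] by simp
      finally show "g x = (- CS) x" by simp
    qed
  qed
  show ?thesis unfolding L' pm dH by (simp add: fun_eq_iff fun_Compl_def)
qed

end
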